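(* Consider the two-stage robust problem $\min_{x\in\mathcal X}c_1x+\max_{u\in\mathcal U(x)}\min_{y\in\mathcal Y(x,u)}c_2y$ with decision-dependent uncertainty set $\mathcal U(x)=\{u\in\mathbb R^{n_u}_+: x_{li}\le u_i\le x_{hi},\ i=1,\dots,n_u\}$, where $x_l=(x_{l1},\dots,x_{ln_u})$ and $x_h=(x_{h1},\dots,x_{hn_u})$ are subvectors of the first-stage variables, and $\mathcal U(x)\ne\emptyset$ for all $x\in\mathcal X$. Then it is equivalent to $\min_{x\in\mathcal X}c_1x+\max_{u\in\mathcal U^0}\min_{y\in\mathcal Y'(x,u)}c_2y$, where $\mathcal U^0=[0,1]^{n_u}$ and $\mathcal Y'(x,u)=\{y\in\mathbb Z^{m_y}_+\times\mathbb R^{n_y}_+: B_2y\ge d-B_1x-E(x_l+u\circ(x_h-x_l))\}$.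
   Context: $\mathcal X=\{x\in\mathbb Z^{m_x}_+\times\mathbb R^{n_x}_+: Ax\ge b\}$, $\mathcal Y(x,u)=\{y\in\mathbb Z^{m_y}_+\times\mathbb R^{n_y}_+: B_2y\ge d-B_1x-Eu\}$, $\circ$ is the componentwise product. The optimal value of an infeasible minimization (maximization) problem is $+\infty$ ($-\infty$). Two formulations are called equivalent if they have the same optimal value and any optimal first-stage solution of one is optimal for the other, and vice versa. *)

theory Defs
  imports "HOL-Analysis.Analysis"
begin

text \<open>Vectors are indexed by finite types. A set IX of coordinates is required to be
integral (the Z_+ part), the remaining coordinates are continuous (the R_+ part).\<close>

definition first_stage_set ::
  "real^'n^'m \<Rightarrow> real^'m \<Rightarrow> 'n set \<Rightarrow> (real^'n) set" where
  "first_stage_set A b IX =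
     {x. (\<forall>i. 0 \<le> x$i) \<and> (\<forall>i\<in>IX. x$i \<in> \<int>) \<and> (\<forall>j. (A *v x)$j \<ge> b$j)}"

definition second_stage_set ::
  "real^'k^'r \<Rightarrow> real^'n^'r \<Rightarrow> real^'p^'r \<Rightarrow> real^'r \<Rightarrow> 'k set
    \<Rightarrow> real^'n \<Rightarrow> real^'p \<Rightarrow> (real^'k) set" where
  "second_stage_set B2 B1 E d IY x u =
     {y. (\<forall>i. 0 \<le> y$i) \<and> (\<forall>i\<in>IY. y$i \<in> \<int>) \<and>
         (\<forall>j. (B2 *v y)$j \<ge> (d - B1 *v x - E *v u)$j)}"

text \<open>Objective of the two-stage robust problem for a fixed first-stage decision:
 c1 x + max_{u in U x} min_{y in Y x u} c2 y (inf over empty set = +infinity).\<close>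
definition tsr_obj ::
  "real^'n \<Rightarrow> real^'k \<Rightarrow> (real^'n \<Rightarrow> (real^'p) set)
    \<Rightarrow> (real^'n \<Rightarrow> real^'p \<Rightarrow> (real^'k) set) \<Rightarrow> real^'n \<Rightarrow> ereal" where
  "tsr_obj c1 c2 U Y x =
     ereal (c1 \<bullet> x) + (SUP u\<in>U x. INF y\<in>Y x u. ereal (c2 \<bullet> y))"

definition tsr_val ::
  "(real^'n) set \<Rightarrow> real^'n \<Rightarrow> real^'k \<Rightarrow> (real^'n \<Rightarrow> (real^'p) set)
    \<Rightarrow> (real^'n \<Rightarrow> real^'p \<Rightarrow> (real^'k) set) \<Rightarrow> ereal" where
  "tsr_val X c1 c2 U Y = (INF x\<in>X. tsr_obj c1 c2 U Y x)"

definition tsr_optimal ::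
  "(real^'n) set \<Rightarrow> real^'n \<Rightarrow> real^'k \<Rightarrow> (real^'n \<Rightarrow> (real^'p) set)
    \<Rightarrow> (real^'n \<Rightarrow> real^'p \<Rightarrow> (real^'k) set) \<Rightarrow> real^'n \<Rightarrow> bool" where
  "tsr_optimal X c1 c2 U Y x \<longleftrightarrow> x \<in> X \<and> tsr_obj c1 c2 U Y x = tsr_val X c1 c2 U Y"

definition tsr_equivalent where
  "tsr_equivalent X c1 c2 U Y U' Y' \<longleftrightarrow>
     tsr_val X c1 c2 U Y = tsr_val X c1 c2 U' Y' \<and>
     (\<forall>x. tsr_optimal X c1 c2 U Y x \<longleftrightarrow> tsr_optimal X c1 c2 U' Y' x)"

end

theory Submission
  imports Defs
begin

theorem proposition4:
  fixes A :: "real^'n^'m" and b :: "real^'m" and IX :: "'n set"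
    and B1 :: "real^'n^'r" and B2 :: "real^'k^'r" and E :: "real^'p^'r" and d :: "real^'r"
    and IY :: "'k set" and c1 :: "real^'n" and c2 :: "real^'k"
    and l h :: "'p \<Rightarrow> 'n"
  defines "X \<equiv> first_stage_set A b IX"
    and "Y \<equiv> second_stage_set B2 B1 E d IY"
    and "U \<equiv> (\<lambda>x. {u :: real^'p. (\<forall>i. 0 \<le> u$i) \<and> (\<forall>i. x$(l i) \<le> u$i \<and> u$i \<le> x$(h i))})"
    and "U0 \<equiv> (\<lambda>x::real^'n. {u :: real^'p. \<forall>i. 0 \<le> u$i \<and> u$i \<le> 1})"
    and "Y' \<equiv> (\<lambda>x u. second_stage_set B2 B1 E d IY x ((\<chi> i. x$(l i)) + (\<chi> i. u$i * (x$(h i) - x$(l i)))))"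
  assumes "inj l" and "inj h"
    and "\<forall>x\<in>X. U x \<noteq> {}"
  shows "tsr_equivalent X c1 c2 U Y U0 Y'"
proof -
  have key: "tsr_obj c1 c2 U Y x = tsr_obj c1 c2 U0 Y' x" if xX: "x \<in> X" for x
  proof -
    define \<phi> where "\<phi> = (\<lambda>u::real^'p. (\<chi> i. x$(l i)) + (\<chi> i. u$i * (x$(h i) - x$(l i))))"
    have x0: "\<forall>i. 0 \<le> x$i" using xX unfolding X_def first_stage_set_def by auto
    from assms(8) xX obtain v where "v \<in> U x" by auto
    hence lh: "\<forall>i. x$(l i) \<le> x$(h i)" unfolding U_def using order_trans by blast
    have img: "\<phi> ` U0 x = U x"
    proof
      show "\<phi> ` U0 x \<subseteq> U x"
      proof
        fix w assume "w \<in> \<phi> ` U0 x"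
        then obtain u where u: "\<forall>i. 0 \<le> u$i \<and> u$i \<le> 1" and w: "w = \<phi> u"
          unfolding U0_def by auto
        have "\<forall>i. x$(l i) \<le> w$i \<and> w$i \<le> x$(h i)"
        proof
          fix i
          have a: "0 \<le> u$i * (x$(h i) - x$(l i))" using u lh by simp
          have "u$i * (x$(h i) - x$(l i)) \<le> 1 * (x$(h i) - x$(l i))"
            using u lh by (intro mult_right_mono) auto
          then show "x$(l i) \<le> w$i \<and> w$i \<le> x$(h i)" using a unfolding w \<phi>_def by simp
        qed
        moreover have "\<forall>i. 0 \<le> w$i" using calculation x0 by (meson order_trans)
        ultimately show "w \<in> U x" unfolding U_def by simp
      qed
    next
      show "U x \<subseteq> \<phi> ` U0 x"
      proof
        fix w assume w: "w \<in> U x"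
        define u where "u = (\<chi> i. if x$(h i) > x$(l i) then (w$i - x$(l i)) / (x$(h i) - x$(l i)) else 0)"
        have "\<forall>i. 0 \<le> u$i \<and> u$i \<le> 1"
          using w unfolding u_def U_def by (auto simp: divide_simps)
        hence "u \<in> U0 x" unfolding U0_def by simp
        moreover have "w = \<phi> u"
        proof (rule vec_eq_iff[THEN iffD2], rule allI)
          fix i
          show "w$i = \<phi> u $ i"
          proof (cases "x$(h i) > x$(l i)")
            case True then show ?thesis unfolding \<phi>_def u_def by simp
          next
            case False
            from w have "x$(l i) \<le> w$i" "w$i \<le> x$(h i)" unfolding U_def by auto
            with False have "w$i = x$(l i)" by linarith
            then show ?thesis unfolding \<phi>_def u_def using False by simp
          qed
        qed
        ultimately show "w \<in> \<phi> ` U0 x" by blast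
      qed
    qed
    have "(SUP u\<in>U x. INF y\<in>Y x u. ereal (c2 \<bullet> y)) = (SUP u\<in>\<phi> ` U0 x. INF y\<in>Y x u. ereal (c2 \<bullet> y))"
      using img by simp
    also have "\<dots> = (SUP u\<in>U0 x. INF y\<in>Y' x u. ereal (c2 \<bullet> y))"
      unfolding Y'_def Y_def \<phi>_def by (simp add: image_comp)
    finally show ?thesis unfolding tsr_obj_def by simp
  qed
  have v: "tsr_val X c1 c2 U Y = tsr_val X c1 c2 U0 Y'"
    unfolding tsr_val_def using key by (intro INF_cong) auto
  show ?thesis unfolding tsr_equivalent_def tsr_optimal_def using v key by auto
qed

end
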